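(* Let $\mathcal{G}=\{G_n\}_{n=1}^\infty$ be a graph sequence which is a large girth sequence. Then $e(\mathcal{G})=c(\mathcal{G})$.
   Context: A graph sequence is a sequence $\mathcal{G}=\{G_n\}_{n=1}^\infty$ of finite simple graphs such that $\sup_n \max_{x\in V(G_n)}\deg(x)<\infty$ and $|V(G_n)|\to\infty$. For graph sequences $\mathcal{G},\mathcal{H}$ with $V(H_n)=V(G_n)$ for all $n$, write $\mathcal{H}\prec\mathcal{G}$ if there is an integer $L>0$ such that $d_{G_n}(x,y)\le L\, d_{H_n}(x,y)$ for all $n$ and all $x,y\in V(G_n)$, where $d_{G_n},d_{H_n}$ are the shortest path metrics; $\mathcal{G}\simeq\mathcal{H}$ means $\mathcal{H}\prec\mathcal{G}$ and $\mathcal{G}\prec\mathcal{H}$. The edge number is $e(\mathcal{G})=\liminf_{n\to\infty}|E(G_n)|/|V(G_n)|$ and the cost is $c(\mathcal{G})=\inf_{\mathcal{H}\simeq\mathcal{G}} e(\mathcal{H})$. $\mathcal{G}$ is a large girth sequence if for every $k\ge1$ there is $n_k$ such that for $n\ge n_k$ the graph $G_n$ contains no cycle of length at most $k$. *)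

theory Defs
  imports Complex_Main "HOL-Library.Extended_Nat" "HOL-Library.Extended_Real"
    "HOL-Library.Liminf_Limsup"
begin

text \<open>A graph sequence is given by vertex sets V n and adjacency relations E n
  (simple graphs: symmetric, irreflexive, edges inside V n). Indexing starts at n = 0.\<close>

definition simple_graph :: "'a set \<Rightarrow> ('a \<Rightarrow> 'a \<Rightarrow> bool) \<Rightarrow> bool" where
  "simple_graph V E \<longleftrightarrow> finite V \<and> (\<forall>x y. E x y \<longrightarrow> x \<in> V \<and> y \<in> V \<and> x \<noteq> y \<and> E y x)"

definition graph_seq :: "(nat \<Rightarrow> 'a set) \<Rightarrow> (nat \<Rightarrow> 'a \<Rightarrow> 'a \<Rightarrow> bool) \<Rightarrow> bool" where
  "graph_seq V E \<longleftrightarrow> (\<forall>n. simple_graph (V n) (E n))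
     \<and> (\<exists>D::nat. \<forall>n. \<forall>x\<in>V n. card {y. E n x y} \<le> D)
     \<and> filterlim (\<lambda>n. card (V n)) at_top sequentially"

definition is_walk :: "'a set \<Rightarrow> ('a \<Rightarrow> 'a \<Rightarrow> bool) \<Rightarrow> 'a list \<Rightarrow> bool" where
  "is_walk V E xs \<longleftrightarrow> xs \<noteq> [] \<and> set xs \<subseteq> V \<and> (\<forall>i. Suc i < length xs \<longrightarrow> E (xs ! i) (xs ! Suc i))"

text \<open>Shortest path metric (infinite between different components).\<close>
definition gdist :: "'a set \<Rightarrow> ('a \<Rightarrow> 'a \<Rightarrow> bool) \<Rightarrow> 'a \<Rightarrow> 'a \<Rightarrow> enat" where
  "gdist V E x y = Inf {enat (length xs - 1) | xs. is_walk V E xs \<and> hd xs = x \<and> last xs = y}"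

text \<open>H \<prec> G.\<close>
definition seq_prec :: "(nat \<Rightarrow> 'a set) \<Rightarrow> (nat \<Rightarrow> 'a \<Rightarrow> 'a \<Rightarrow> bool) \<Rightarrow> (nat \<Rightarrow> 'a \<Rightarrow> 'a \<Rightarrow> bool) \<Rightarrow> bool" where
  "seq_prec V H G \<longleftrightarrow> (\<exists>L::nat. L > 0 \<and>
     (\<forall>n. \<forall>x\<in>V n. \<forall>y\<in>V n. gdist (V n) (G n) x y \<le> enat L * gdist (V n) (H n) x y))"

definition seq_equiv :: "(nat \<Rightarrow> 'a set) \<Rightarrow> (nat \<Rightarrow> 'a \<Rightarrow> 'a \<Rightarrow> bool) \<Rightarrow> (nat \<Rightarrow> 'a \<Rightarrow> 'a \<Rightarrow> bool) \<Rightarrow> bool" where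
  "seq_equiv V G H \<longleftrightarrow> seq_prec V H G \<and> seq_prec V G H"

definition num_edges :: "'a set \<Rightarrow> ('a \<Rightarrow> 'a \<Rightarrow> bool) \<Rightarrow> nat" where
  "num_edges V E = card {{x, y} | x y. x \<in> V \<and> y \<in> V \<and> E x y}"

definition edge_number :: "(nat \<Rightarrow> 'a set) \<Rightarrow> (nat \<Rightarrow> 'a \<Rightarrow> 'a \<Rightarrow> bool) \<Rightarrow> ereal" where
  "edge_number V E = liminf (\<lambda>n. ereal (real (num_edges (V n) (E n)) / real (card (V n))))"

definition cost :: "(nat \<Rightarrow> 'a set) \<Rightarrow> (nat \<Rightarrow> 'a \<Rightarrow> 'a \<Rightarrow> bool) \<Rightarrow> ereal" where
  "cost V G = Inf {edge_number V H | H. graph_seq V H \<and> seq_equiv V G H}"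

definition has_cycle_of_length :: "'a set \<Rightarrow> ('a \<Rightarrow> 'a \<Rightarrow> bool) \<Rightarrow> nat \<Rightarrow> bool" where
  "has_cycle_of_length V E m \<longleftrightarrow> 3 \<le> m \<and> (\<exists>xs. length xs = m \<and> distinct xs \<and> set xs \<subseteq> V
      \<and> (\<forall>i<m. E (xs ! i) (xs ! ((i + 1) mod m))))"

definition large_girth :: "(nat \<Rightarrow> 'a set) \<Rightarrow> (nat \<Rightarrow> 'a \<Rightarrow> 'a \<Rightarrow> bool) \<Rightarrow> bool" where
  "large_girth V E \<longleftrightarrow> (\<forall>k\<ge>1. \<exists>nk. \<forall>n\<ge>nk. \<forall>m\<le>k. \<not> has_cycle_of_length (V n) (E n) m)"

end

theory Submission imports Defs "HOL-Library.Z2" "HOL-Library.Function_Algebras" begin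

definition dl :: "'a set \<Rightarrow> 'a set \<Rightarrow> bit" where "dl e = (\<lambda>f. if f = e then 1 else 0)"

fun ch :: "'a list \<Rightarrow> 'a set \<Rightarrow> bit" where
  "ch (x#y#xs) = dl {x,y} + ch (y#xs)" | "ch _ = 0"

fun wk :: "('a \<Rightarrow> 'a \<Rightarrow> bool) \<Rightarrow> 'a list \<Rightarrow> bool" where
  "wk E (x#y#xs) = (E x y \<and> wk E (y#xs))" | "wk E [x] = True" | "wk E [] = False"

lemma bit_add_self: "(a::bit) + a = 0"
  by (cases a) auto

lemma fun_add_self: "(f::'b \<Rightarrow> bit) + f = 0"
  by (rule ext) (simp add: bit_add_self)

lemma fun_add_eq0: "(f::'b \<Rightarrow> bit) + g = 0 \<Longrightarrow> f = g"
  by (metis add.assoc add_0 fun_add_self)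

lemma ch_app: "ch (xs @ y # ys) = ch (xs @ [y]) + ch (y # ys)"
proof (induction xs)
  case Nil
  have "ch [y] = 0" by simp
  then show ?case by (metis add_0 append_Nil)
next
  case (Cons a xs)
  show ?case
  proof (cases xs)
    case Nil
    then show ?thesis by (simp only: append.simps ch.simps add_0_right)
  next
    case (Cons b zs)
    show ?thesis using Cons.IH unfolding Cons by (simp only: append.simps ch.simps add.assoc)
  qed
qed

lemma wk_app: "wk E (xs @ y # ys) = (wk E (xs @ [y]) \<and> wk E (y # ys))"
proof (induction xs)
  case Nil then show ?case by simp
next
  case (Cons a xs) then show ?case by (cases xs) auto
qed

lemma ch_rev: "ch (rev xs) = ch xs"
proof (induction xs rule: ch.induct)
  case (1 x y xs)
  have "ch (rev (x#y#xs)) = ch (rev xs @ y # [x])" by simp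
  also have "\<dots> = ch (rev xs @ [y]) + ch [y,x]" by (rule ch_app)
  also have "\<dots> = ch (y#xs) + dl {x,y}" using 1 by (simp add: insert_commute)
  finally show ?case by (simp add: add.commute)
qed auto

lemma wk_rev: assumes "\<And>x y. E x y \<Longrightarrow> E y x" shows "wk E (rev xs) = wk E xs"
proof (induction xs rule: ch.induct)
  case (1 x y xs)
  have "wk E (rev (x#y#xs)) = wk E (rev xs @ y # [x])" by simp
  also have "\<dots> = (wk E (rev xs @ [y]) \<and> wk E [y,x])" by (rule wk_app)
  finally show ?case using 1 assms by auto
qed auto

lemma wk_nth: "wk E xs \<longleftrightarrow> xs \<noteq> [] \<and> (\<forall>i. Suc i < length xs \<longrightarrow> E (xs!i) (xs!Suc i))"
proof (induction xs rule: ch.induct)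
  case (1 x y xs)
  show ?case
  proof
    assume "wk E (x#y#xs)"
    then show "x # y # xs \<noteq> [] \<and> (\<forall>i. Suc i < length (x # y # xs) \<longrightarrow> E ((x # y # xs) ! i) ((x # y # xs) ! Suc i))"
      using 1 by (auto simp: less_Suc_eq_0_disj)
  next
    assume a: "x # y # xs \<noteq> [] \<and> (\<forall>i. Suc i < length (x # y # xs) \<longrightarrow> E ((x # y # xs) ! i) ((x # y # xs) ! Suc i))"
    then have "E x y" by force
    moreover have "wk E (y#xs)" using 1 a by force
    ultimately show "wk E (x#y#xs)" by simp
  qed
qed auto

lemma is_walk_wk: "is_walk V E xs \<longleftrightarrow> wk E xs \<and> set xs \<subseteq> V"
  unfolding is_walk_def wk_nth by auto


lemma ch_two_back: "ch [x, y, x] = 0"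
proof -
  have "ch [x,y,x] = dl {x,y} + dl {y,x}" by (simp only: ch.simps add_0_right)
  also have "\<dots> = 0" by (simp only: insert_commute[of y x] fun_add_self)
  finally show ?thesis .
qed

lemma closed_walk_cycle:
  assumes E: "\<And>x y. E x y \<Longrightarrow> x \<noteq> y \<and> E y x"
  shows "wk E xs \<Longrightarrow> set xs \<subseteq> V \<Longrightarrow> hd xs = last xs \<Longrightarrow> ch xs \<noteq> 0
     \<Longrightarrow> \<exists>m. m < length xs \<and> has_cycle_of_length V E m"
proof (induction "length xs" arbitrary: xs rule: less_induct)
  case less
  show ?case
  proof (cases "distinct (butlast xs)")
    case True
    define m where "m = length xs - 1"
    have ne: "xs \<noteq> []" using less.prems(1) by auto
    then have lm: "length xs = Suc m" unfolding m_def by simp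
    have wn: "\<And>i. Suc i < length xs \<Longrightarrow> E (xs!i) (xs!Suc i)" using less.prems(1) wk_nth by blast
    have "last xs = xs ! m" using last_conv_nth[OF ne] m_def by simp
    then have hl: "xs ! 0 = xs ! m" using less.prems(3) hd_conv_nth[OF ne] by simp
    consider "m = 0" | "m = 1" | "m = 2" | "m \<ge> 3" by linarith
    then show ?thesis
    proof cases
      case 1
      then obtain a where "xs = [a]" using lm by (cases xs) auto
      then show ?thesis using less.prems(4) by simp
    next
      case 2
      then have "E (xs!0) (xs!0)" using wn[of 0] hl lm by simp
      then show ?thesis using E by blast
    next
      case 3
      then obtain a b c where xs: "xs = [a,b,c]" using lm
        by (cases xs; cases "tl xs"; cases "tl (tl xs)") auto
      then have "a = c" using less.prems(3) by simp
      then show ?thesis using less.prems(4) xs ch_two_back by metis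
    next
      case 4
      define ys where "ys = butlast xs"
      have ly: "length ys = m" unfolding ys_def m_def by simp
      have yn: "\<And>i. i < m \<Longrightarrow> ys ! i = xs ! i" unfolding ys_def using ly
        by (simp add: nth_butlast ys_def)
      have "has_cycle_of_length V E m"
        unfolding has_cycle_of_length_def
      proof (intro conjI exI)
        show "3 \<le> m" by fact
        show "length ys = m" by fact
        show "distinct ys" using True ys_def by simp
        show "set ys \<subseteq> V" using less.prems(2) unfolding ys_def by (meson in_set_butlastD subsetD subsetI)
        show "\<forall>i<m. E (ys ! i) (ys ! ((i + 1) mod m))"
        proof (intro allI impI)
          fix i assume i: "i < m"
          show "E (ys ! i) (ys ! ((i + 1) mod m))"
          proof (cases "Suc i < m")
            case True
            then show ?thesis using yn wn[of i] i lm by simp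
          next
            case False
            then have si: "Suc i = m" using i by simp
            then have "i = m - 1" "(i+1) mod m = 0" by auto
            then show ?thesis using yn wn[of i] i lm hl 4
              by (metis Suc_eq_plus1 Suc_lessI Suc_pred' lessI less_zeroE zero_less_iff_neq_zero)
          qed
        qed
      qed
      then show ?thesis using lm by auto
    qed
  next
    case False
    obtain p y q r where d: "butlast xs = p @ [y] @ q @ [y] @ r"
      using not_distinct_decomp[OF False] by blast
    have ne: "xs \<noteq> []" using less.prems(1) by auto
    define z where "z = last xs"
    have xs: "xs = p @ y # q @ y # r @ [z]"
      using append_butlast_last_id[OF ne] d unfolding z_def by (metis append.assoc append_Cons append_Nil)
    have hz: "hd xs = z" using less.prems(3) z_def by simp
    define w1 where "w1 = y # q @ [y]"
    define w2 where "w2 = p @ y # r @ [z]"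
    have ch: "ch xs = ch (p @ [y]) + ch w1 + ch (y # r @ [z])"
      unfolding xs w1_def using ch_app[of p y "q @ y # r @ [z]"] ch_app[of "y # q" y "r @ [z]"]
      by (simp add: add.assoc)
    have ch2: "ch w2 = ch (p @ [y]) + ch (y # r @ [z])" unfolding w2_def by (rule ch_app)
    have wk1: "wk E (p @ [y])" "wk E w1" "wk E (y # r @ [z])"
      using less.prems(1) unfolding xs w1_def
      by (metis append.assoc append_Cons append_Nil wk_app)+
    have wk2: "wk E w2" unfolding w2_def using wk1 wk_app by metis
    have s1: "set w1 \<subseteq> V" "set w2 \<subseteq> V" using less.prems(2) unfolding xs w1_def w2_def by auto
    have h1: "hd w1 = last w1" unfolding w1_def by simp
    have h2: "hd w2 = last w2" unfolding w2_def using hz xs by (cases p) auto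
    have l1: "length w1 < length xs" "length w2 < length xs" unfolding xs w1_def w2_def by auto
    have "ch w1 \<noteq> 0 \<or> ch w2 \<noteq> 0"
    proof (rule ccontr)
      assume "\<not> ?thesis"
      then have "ch w1 = 0" "ch w2 = 0" by auto
      then have "ch xs = 0" using ch ch2 by (metis add.commute add.left_commute add_0)
      then show False using less.prems(4) by simp
    qed
    then show ?thesis
    proof
      assume "ch w1 \<noteq> 0"
      then obtain m where "m < length w1" "has_cycle_of_length V E m"
        using less.hyps[OF l1(1) wk1(2) s1(1) h1] by blast
      then show ?thesis using l1 by (meson less_trans)
    next
      assume "ch w2 \<noteq> 0"
      then obtain m where "m < length w2" "has_cycle_of_length V E m"
        using less.hyps[OF l1(2) wk2 s1(2) h2] by blast
      then show ?thesis using l1 by (meson less_trans)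
    qed
  qed
qed


lemma lift_walk:
  assumes step: "\<And>a b. H a b \<Longrightarrow> \<exists>q. wk G q \<and> set q \<subseteq> V \<and> hd q = a \<and> last q = b \<and> length q \<le> Suc M \<and> ch q \<in> T"
    and T0: "0 \<in> T" and Tadd: "\<And>u v. u \<in> T \<Longrightarrow> v \<in> T \<Longrightarrow> u + v \<in> T"
  shows "wk H p \<Longrightarrow> set p \<subseteq> V \<Longrightarrow> \<exists>W. wk G W \<and> set W \<subseteq> V \<and> hd W = hd p \<and> last W = last p
           \<and> length W \<le> (length p - 1) * M + 1 \<and> ch W \<in> T"
proof (induction p rule: ch.induct)
  case (1 x y xs)
  then obtain W2 where W2: "wk G W2" "set W2 \<subseteq> V" "hd W2 = y" "last W2 = last (y#xs)"
    "length W2 \<le> (length (y#xs) - 1) * M + 1" "ch W2 \<in> T" by auto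
  obtain q where q: "wk G q" "set q \<subseteq> V" "hd q = x" "last q = y" "length q \<le> Suc M" "ch q \<in> T"
    using step[of x y] 1(2) by auto
  have "q \<noteq> []" using q(1) by auto
  then obtain q' where q': "q = q' @ [y]" using q(4) by (metis append_butlast_last_id)
  have "W2 \<noteq> []" using W2(1) by auto
  then obtain r where r: "W2 = y # r" using W2(3) by (cases W2) auto
  define W where "W = q' @ y # r"
  have "ch W = ch q + ch W2" unfolding W_def q' r by (rule ch_app)
  then have "ch W \<in> T" using Tadd q(6) W2(6) by simp
  moreover have "wk G W" unfolding W_def using wk_app q(1) W2(1) q' r by metis
  moreover have "set W \<subseteq> V" using q(2) W2(2) q' r W_def by auto
  moreover have "hd W = x" using q(3) q' W_def r W2(3) by (cases q') auto
  moreover have "last W = last (x#y#xs)" using W2(4) r W_def by simp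
  moreover have "length W \<le> (length (x#y#xs) - 1) * M + 1"
    using q(5) W2(5) q' r W_def by simp
  ultimately show ?case by (metis list.sel(1))
next
  case ("2_2" v)
  have "ch [v] \<in> T" using T0 by (simp only: ch.simps)
  then show ?case using "2_2" by (intro exI[of _ "[v]"] conjI) (simp_all del: ch.simps)
qed auto

lemma vs_bit: "vector_space (\<lambda>(c::bit) (f::'b \<Rightarrow> bit) x. c * f x)"
  by unfold_locales (auto simp: fun_eq_iff distrib_left distrib_right)


lemma md_bit: "module (\<lambda>(c::bit) (f::'b \<Rightarrow> bit) x. c * f x)"
  by unfold_locales (auto simp: fun_eq_iff distrib_left distrib_right)

lemma sum_fun_app: "(sum f A) x = sum (\<lambda>a. f a x) A"
  by (induction A rule: infinite_finite_induct) auto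

lemma dl_indep: "\<not> module.dependent (\<lambda>(c::bit) (f::'b set \<Rightarrow> bit) x. c * f x) (dl ` S)"
  unfolding module.independent_explicit_module[OF md_bit]
proof (intro allI impI)
  fix t u v
  assume t: "finite t" "t \<subseteq> dl ` S" and s: "(\<Sum>v\<in>t. (\<lambda>x. u v * v x)) = 0" and v: "v \<in> t"
  then obtain e where e: "v = dl e" by auto
  have "(\<Sum>w\<in>t. (\<lambda>x. u w * w x)) e = 0" using s by simp
  then have "(\<Sum>w\<in>t. u w * w e) = 0" by (simp add: sum_fun_app)
  moreover have "(\<Sum>w\<in>t. u w * w e) = u v * v e + (\<Sum>w\<in>t-{v}. u w * w e)"
    by (rule sum.remove[OF t(1) v])
  moreover have "(\<Sum>w\<in>t-{v}. u w * w e) = 0"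
  proof (rule sum.neutral, rule ballI)
    fix w assume w: "w \<in> t - {v}"
    then obtain e' where e': "w = dl e'" using t by auto
    then have "e' \<noteq> e" using w e by auto
    then show "u w * w e = 0" using e' by (simp add: dl_def)
  qed
  moreover have "v e = 1" using e by (simp add: dl_def)
  ultimately show "u v = 0" by simp
qed

lemma dl_inj: "inj dl"
proof (rule injI)
  fix a b :: "'b set" assume "dl a = dl b"
  then have "dl a a = dl b a" by simp
  then show "a = b" unfolding dl_def by (cases "a = b") auto
qed


lemma edges_le:
  fixes V :: "'a set"
  assumes sG: "simple_graph V G" and sH: "simple_graph V H"
  and GH: "\<And>x y. G x y \<Longrightarrow> \<exists>xs. wk H xs \<and> set xs \<subseteq> V \<and> hd xs = x \<and> last xs = y \<and> length xs \<le> Suc L"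
  and HG: "\<And>x y. H x y \<Longrightarrow> \<exists>xs. wk G xs \<and> set xs \<subseteq> V \<and> hd xs = x \<and> last xs = y \<and> length xs \<le> Suc M"
  and girth: "\<And>m. m \<le> L*M+1 \<Longrightarrow> \<not> has_cycle_of_length V G m"
  shows "num_edges V G \<le> num_edges V H"
proof -
  define sc where "sc = (\<lambda>(c::bit) (f::'a set \<Rightarrow> bit) x. c * f x)"
  have vs: "vector_space sc" unfolding sc_def by (rule vs_bit)
  have md: "module sc" unfolding sc_def by (rule md_bit)
  define EG where "EG = {{x, y} | x y. x \<in> V \<and> y \<in> V \<and> G x y}"
  define EH where "EH = {{x, y} | x y. x \<in> V \<and> y \<in> V \<and> H x y}"
  have finV: "finite V" using sG simple_graph_def by blast
  have "EH \<subseteq> Pow V" unfolding EH_def by auto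
  then have finH: "finite EH" using finV finite_subset by blast
  have symG: "\<And>x y. G x y \<Longrightarrow> G y x" and irrG: "\<And>x y. G x y \<Longrightarrow> x \<noteq> y \<and> G y x"
    and inG: "\<And>x y. G x y \<Longrightarrow> x \<in> V \<and> y \<in> V"
    using sG unfolding simple_graph_def by blast+
  have inH: "\<And>x y. H x y \<Longrightarrow> x \<in> V \<and> y \<in> V" using sH unfolding simple_graph_def by blast
  define w where "w h = (SOME q. wk G q \<and> set q \<subseteq> V \<and> {hd q, last q} = h \<and> length q \<le> Suc M)" for h
  define Sv where "Sv = (\<lambda>h. ch (w h)) ` EH"
  define T where "T = module.span sc Sv"
  have T0: "0 \<in> T" unfolding T_def by (rule module.span_zero[OF md])
  have Tadd: "\<And>u v. u \<in> T \<Longrightarrow> v \<in> T \<Longrightarrow> u + v \<in> T" unfolding T_def by (rule module.span_add[OF md])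
  have step: "\<exists>q. wk G q \<and> set q \<subseteq> V \<and> hd q = a \<and> last q = b \<and> length q \<le> Suc M \<and> ch q \<in> T"
    if hab: "H a b" for a b
  proof -
    have ab: "{a,b} \<in> EH" unfolding EH_def using inH[OF hab] hab by blast
    obtain q0 where "wk G q0 \<and> set q0 \<subseteq> V \<and> hd q0 = a \<and> last q0 = b \<and> length q0 \<le> Suc M"
      using HG[OF hab] by blast
    then have "\<exists>q. wk G q \<and> set q \<subseteq> V \<and> {hd q, last q} = {a,b} \<and> length q \<le> Suc M" by blast
    then have q: "wk G (w {a,b}) \<and> set (w {a,b}) \<subseteq> V \<and> {hd (w {a,b}), last (w {a,b})} = {a,b} \<and> length (w {a,b}) \<le> Suc M"
      unfolding w_def by (rule someI_ex)
    define q where "q = w {a,b}"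
    have chq: "ch q \<in> T" unfolding T_def q_def Sv_def
      using ab by (intro module.span_base[OF md]) blast
    have "(hd q = a \<and> last q = b) \<or> (hd q = b \<and> last q = a)" using q unfolding q_def
      by (simp add: doubleton_eq_iff)
    then show ?thesis
    proof
      assume "hd q = a \<and> last q = b"
      then show ?thesis using q chq unfolding q_def by blast
    next
      assume h: "hd q = b \<and> last q = a"
      have "q \<noteq> []" using q unfolding q_def by auto
      then have "wk G (rev q)" "set (rev q) \<subseteq> V" "hd (rev q) = a" "last (rev q) = b"
        "length (rev q) \<le> Suc M" "ch (rev q) \<in> T"
        using q h chq wk_rev[of G q, OF symG] ch_rev[of q] unfolding q_def
        by (auto simp: hd_rev last_rev)
      then show ?thesis by blast
    qed
  qed
  have sub: "dl ` EG \<subseteq> T"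
  proof
    fix d assume "d \<in> dl ` EG"
    then obtain x y where d: "d = dl {x,y}" and xy: "G x y" unfolding EG_def by blast
    obtain p where p: "wk H p" "set p \<subseteq> V" "hd p = x" "last p = y" "length p \<le> Suc L"
      using GH[OF xy] by blast
    obtain W where W: "wk G W" "set W \<subseteq> V" "hd W = x" "last W = y"
      "length W \<le> (length p - 1) * M + 1" "ch W \<in> T"
      using lift_walk[of H G V M T, OF step T0 Tadd p(1,2)] p(3,4) by blast
    have "(length p - 1) * M \<le> L * M" using p(5) by (intro mult_right_mono) auto
    then have lW: "length W \<le> L * M + 1" using W(5) by linarith
    have "W \<noteq> []" using W(1) by auto
    then obtain W' where W': "W = W' @ [y]" using W(4) by (metis append_butlast_last_id)
    have wc: "wk G (W' @ y # [x])" using W(1) W' wk_app[of G W' y "[x]"] symG[OF xy] by simp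
    have cc: "ch (W' @ y # [x]) = ch W + dl {y, x}"
      using ch_app[of W' y "[x]"] W' by (simp only: ch.simps add_0_right)
    have "ch (W' @ y # [x]) = 0"
    proof (rule ccontr)
      assume nz: "ch (W' @ y # [x]) \<noteq> 0"
      have "set (W' @ y # [x]) \<subseteq> V" using W(2) W' inG[OF xy] by auto
      moreover have "hd (W' @ y # [x]) = last (W' @ y # [x])" using W(3) W' by (cases W') auto
      ultimately obtain m where "m < length (W' @ y # [x])" "has_cycle_of_length V G m"
        using closed_walk_cycle[of G, OF irrG wc _ _ nz] by blast
      moreover have "length (W' @ y # [x]) = length W + 1" using W' by simp
      ultimately show False using girth lW by fastforce
    qed
    then have "ch W = dl {y, x}" using cc fun_add_eq0 by metis
    then show "d \<in> T" using W(6) d by (simp add: insert_commute)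
  qed
  have finS: "finite Sv" unfolding Sv_def using finH by simp
  have "card (dl ` EG) \<le> card Sv"
    using vector_space.independent_span_bound[OF vs finS _ sub[unfolded T_def]] dl_indep[of EG]
    unfolding sc_def by blast
  moreover have "card (dl ` EG) = card EG" using dl_inj by (metis card_image inj_on_subset subset_UNIV)
  moreover have "card Sv \<le> card EH" unfolding Sv_def using finH by (rule card_image_le)
  ultimately show ?thesis unfolding num_edges_def EG_def EH_def by linarith
qed


lemma gdist_edge: "E x y \<Longrightarrow> x \<in> V \<Longrightarrow> y \<in> V \<Longrightarrow> gdist V E x y \<le> 1"
  unfolding gdist_def
proof (rule Inf_lower)
  assume "E x y" "x \<in> V" "y \<in> V"
  then have "is_walk V E [x,y]" unfolding is_walk_wk by simp
  then show "1 \<in> {enat (length xs - 1) |xs. is_walk V E xs \<and> hd xs = x \<and> last xs = y}"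
    by (intro CollectI exI[of _ "[x,y]"]) (simp add: one_enat_def)
qed

lemma gdist_walk:
  assumes "gdist V E x y \<le> enat k"
  shows "\<exists>xs. wk E xs \<and> set xs \<subseteq> V \<and> hd xs = x \<and> last xs = y \<and> length xs \<le> Suc k"
proof -
  define A where "A = {enat (length xs - 1) |xs. is_walk V E xs \<and> hd xs = x \<and> last xs = y}"
  have "A \<noteq> {}"
  proof
    assume "A = {}"
    then have "gdist V E x y = \<infinity>" unfolding gdist_def A_def[symmetric] by (simp add: top_enat_def)
    then show False using assms by simp
  qed
  then have "Inf A = (LEAST z. z \<in> A)" by (simp add: Inf_enat_def)
  then have "Inf A \<in> A" using \<open>A \<noteq> {}\<close> by (metis LeastI ex_in_conv)
  then obtain xs where xs: "Inf A = enat (length xs - 1)" "is_walk V E xs" "hd xs = x" "last xs = y"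
    unfolding A_def by blast
  have "gdist V E x y = Inf A" unfolding gdist_def A_def ..
  then have "length xs - 1 \<le> k" using assms xs(1) by simp
  then have "length xs \<le> Suc k" by simp
  then show ?thesis using xs is_walk_wk by blast
qed


lemma prec_walk:
  assumes "seq_prec V H G" "\<forall>n. simple_graph (V n) (H n)"
  shows "\<exists>L. \<forall>n x y. H n x y \<longrightarrow> (\<exists>xs. wk (G n) xs \<and> set xs \<subseteq> V n \<and> hd xs = x \<and> last xs = y \<and> length xs \<le> Suc L)"
proof -
  obtain L :: nat where L: "\<forall>n. \<forall>x\<in>V n. \<forall>y\<in>V n. gdist (V n) (G n) x y \<le> enat L * gdist (V n) (H n) x y"
    using assms(1) unfolding seq_prec_def by blast
  have "\<exists>xs. wk (G n) xs \<and> set xs \<subseteq> V n \<and> hd xs = x \<and> last xs = y \<and> length xs \<le> Suc L"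
    if h: "H n x y" for n x y
  proof -
    have xy: "x \<in> V n" "y \<in> V n" using h assms(2) unfolding simple_graph_def by blast+
    have "gdist (V n) (H n) x y \<le> 1" using gdist_edge[of "H n" x y "V n"] h xy by blast
    then have "enat L * gdist (V n) (H n) x y \<le> enat L * 1" by (intro mult_left_mono) auto
    then have "gdist (V n) (G n) x y \<le> enat L" using L xy by (metis mult.right_neutral order_trans)
    then show ?thesis by (rule gdist_walk)
  qed
  then show ?thesis by blast
qed

theorem theorem1:
  fixes V :: "nat \<Rightarrow> 'a set" and G :: "nat \<Rightarrow> 'a \<Rightarrow> 'a \<Rightarrow> bool"
  assumes "graph_seq V G" and "large_girth V G"
  shows "edge_number V G = cost V G"
proof (rule antisym)
  have "seq_prec V G G" unfolding seq_prec_def by (intro exI[of _ "1::nat"] conjI ballI allI) (simp_all only: one_enat_def[symmetric] mult_1 order_refl zero_less_one)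
  then have "seq_equiv V G G" unfolding seq_equiv_def by simp
  then show "cost V G \<le> edge_number V G" unfolding cost_def using assms(1)
    by (intro Inf_lower) blast
next
  have sG: "\<forall>n. simple_graph (V n) (G n)" using assms(1) unfolding graph_seq_def by blast
  show "edge_number V G \<le> cost V G" unfolding cost_def
  proof (rule Inf_greatest)
    fix z assume "z \<in> {edge_number V H |H. graph_seq V H \<and> seq_equiv V G H}"
    then obtain H where z: "z = edge_number V H" and gH: "graph_seq V H" and eq: "seq_equiv V G H" by blast
    have sH: "\<forall>n. simple_graph (V n) (H n)" using gH unfolding graph_seq_def by blast
    obtain L where L: "\<forall>n x y. H n x y \<longrightarrow> (\<exists>xs. wk (G n) xs \<and> set xs \<subseteq> V n \<and> hd xs = x \<and> last xs = y \<and> length xs \<le> Suc L)"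
      using prec_walk[of V H G] eq sH unfolding seq_equiv_def by blast
    obtain M where M: "\<forall>n x y. G n x y \<longrightarrow> (\<exists>xs. wk (H n) xs \<and> set xs \<subseteq> V n \<and> hd xs = x \<and> last xs = y \<and> length xs \<le> Suc M)"
      using prec_walk[of V G H] eq sG unfolding seq_equiv_def by blast
    obtain nk where nk: "\<forall>n\<ge>nk. \<forall>m\<le>M*L+1. \<not> has_cycle_of_length (V n) (G n) m"
      using assms(2) unfolding large_girth_def by (meson le_add2)
    have "num_edges (V n) (G n) \<le> num_edges (V n) (H n)" if "n \<ge> nk" for n
      using edges_le[of "V n" "G n" "H n" M L] sG sH L M nk that by blast
    then have ev: "eventually (\<lambda>n. ereal (real (num_edges (V n) (G n)) / real (card (V n)))
        \<le> ereal (real (num_edges (V n) (H n)) / real (card (V n)))) sequentially"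
      unfolding eventually_sequentially by (intro exI[of _ nk] allI impI) (simp add: divide_right_mono)
    show "edge_number V G \<le> z" unfolding z edge_number_def by (rule Liminf_mono[OF ev])
  qed
qed

end
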